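(* Let $t$ be a deterministic process term of the process algebra $P_{\mathrm{PA}}$ (described in the context) and let $\sigma_1,\sigma_2$ be closed substitutions such that $\mathbf d(\sigma_1(x),\sigma_2(x))<1$ for every state variable $x$. Then \[ \mathbf d(\sigma_1(t),\sigma_2(t)) \le \mathrm{dda}\bigl(\llbracket t\rrbracket_{\mathcal M},\mathbf d(\sigma_1,\sigma_2)\bigr). \]
   Context: Probabilistic transition systems and bisimilarity metric. A signature $\Sigma$ is a countable set of operators $f$, each with an arity $r(f)\in\mathbb N$. Fix disjoint countably infinite sets $\mathcal V_s$ of state variables and $\mathcal V_d$ of distribution variables; $\mathcal V=\mathcal V_s\cup\mathcal V_d$. Open (state) terms are built from state variables and operators; closed terms (processes) $T(\Sigma)$ contain no variables. $\Delta(T(\Sigma))$ is the set of discrete probability distributions on $T(\Sigma)$, $\delta_t$ is the Dirac distribution at $t$, and for distributions $\pi_1,\dots,\pi_{r(f)}$, $f(\pi_1,\dots,\pi_{r(f)})$ is the distribution assigning $f(t_1,\dots,t_{r(f)})$ probability $\prod_i\pi_i(t_i)$. Distribution terms are: distribution variables $\mu$, $\delta(t)$ for state terms $t$, convex combinations $\sum_{i\in I}q_i\theta_i$ ($q_i\in(0,1]$, $\sum q_i=1$), and $f(\theta_1,\dots,\theta_{r(f)})$. A closed substitution $\sigma$ maps state variables to closed terms and distribution variables to distributions; it extends homomorphically to state terms and to distribution terms via $\sigma(\delta(t))=\delta_{\sigma(t)}$, $\sigma(\sum q_i\theta_i)=\sum q_i\sigma(\theta_i)$, $\sigma(f(\theta_1,\dots))=f(\sigma(\theta_1),\dots)$.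 A PTS is $(T(\Sigma),A,\to)$ with $A$ a countable set of actions and $\to\subseteq T(\Sigma)\times A\times\Delta(T(\Sigma))$; write $t\xrightarrow{a}\pi$, and $\mathit{der}(t,a)=\{\pi\mid t\xrightarrow a\pi\}$. A PGSOS rule has the form $\dfrac{\{x_i\xrightarrow{a_{i,m}}\mu_{i,m}\mid i\in I,m\in M_i\}\ \ \{x_i\not\xrightarrow{b_{i,n}}\mid i\in I,n\in N_i\}}{f(x_1,\dots,x_{r(f)})\xrightarrow{a}\theta}$ with $I=\{1,\dots,r(f)\}$, finite $M_i,N_i$, pairwise distinct $x_i\in\mathcal V_s$, pairwise distinct $\mu_{i,m}\in\mathcal V_d$, and $\theta$ a distribution term whose variables are among the $x_i$ and $\mu_{i,m}$. A PTSS $(\Sigma,A,R)$ with $R$ a countable set of PGSOS rules determines a unique supported model: $t\xrightarrow a\pi$ iff for some rule and closed substitution $\sigma$, $\sigma(x_i)\xrightarrow{a_{i,m}}\sigma(\mu_{i,m})$ for all positive premises, $\sigma(x_i)$ has no $b_{i,n}$-transition for all negative premises, $\sigma(f(x_1,\dots))=t$ and $\sigma(\theta)=\pi$. For $d:T(\Sigma)\times T(\Sigma)\to[0,1]$, the Kantorovich lifting is $K(d)(\pi,\pi')=\min_{\omega}\sum_{t,t'}d(t,t')\omega(t,t')$ over couplings $\omega$ of $\pi,\pi'$; the Hausdorff lifting is $H(\hat d)(\Pi_1,\Pi_2)=\max\{\sup_{\pi_1\in\Pi_1}\inf_{\pi_2\in\Pi_2}\hat d(\pi_1,\pi_2),\sup_{\pi_2\in\Pi_2}\inf_{\pi_1\in\Pi_1}\hat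 d(\pi_2,\pi_1)\}$ with $\inf\emptyset=1$, $\sup\emptyset=0$. Let $B(d)(t,t')=\sup_{a\in A}H(K(d))(\mathit{der}(t,a),\mathit{der}(t',a))$. The bisimilarity metric $\mathbf d$ is the least fixed point of $B$ on $[0,1]^{T(\Sigma)\times T(\Sigma)}$ ordered pointwise (equivalently the least 1-bounded pseudometric $d$ such that whenever $d(t,t')<1$ and $t\xrightarrow a\pi$ there is $t'\xrightarrow a\pi'$ with $K(d)(\pi,\pi')\le d(t,t')$). The process algebra $P_{\mathrm{PA}}$: operators are the constant $0$, for each $a\in A$, $n\ge1$, $q_1,\dots,q_n\in(0,1]$ with $\sum q_i=1$ the $n$-ary prefix $a.\bigoplus_{i=1}^n[q_i]\_$ (written $a.\_$ when $n=1$), binary $+$, and binary $\|_B$ for each $B\subseteq A$ ($\|$ denotes $\|_A$). Rules: $a.\bigoplus_{i}[q_i]x_i\xrightarrow a\sum_i q_i\delta(x_i)$; from $x_1\xrightarrow a\mu_1$ infer $x_1+x_2\xrightarrow a\mu_1$; from $x_2\xrightarrow a\mu_2$ infer $x_1+x_2\xrightarrow a\mu_2$; for $a\in B$ from $x_1\xrightarrow a\mu_1$, $x_2\xrightarrow a\mu_2$ infer $x_1\|_Bx_2\xrightarrow a\mu_1\|_B\mu_2$; for $a\notin B$ from $x_1\xrightarrow a\mu_1$ infer $x_1\|_Bx_2\xrightarrow a\mu_1\|_B\delta(x_2)$ and from $x_2\xrightarrow a\mu_2$ infer $x_1\|_Bx_2\xrightarrow a\delta(x_1)\|_B\mu_2$.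 Deterministic process terms are the open terms built only from $0$, state variables, $a.\_$ and $\|$. Multiplicities: $\mathcal M$ is the set of maps $m:\mathcal V\to\mathbb N\cup\{\infty\}$; $0$ is the zero map and $n_V$ ($V\subseteq\mathcal V$) maps $x\in V$ to $n$ and other variables to $0$; $1_x=1_{\{x\}}$. For deterministic terms: $\llbracket0\rrbracket_{\mathcal M}=0$, $\llbracket x\rrbracket_{\mathcal M}=1_x$, $\llbracket t_1\|t_2\rrbracket_{\mathcal M}(x)=\llbracket t_1\rrbracket_{\mathcal M}(x)+\llbracket t_2\rrbracket_{\mathcal M}(x)$, $\llbracket a.t\rrbracket_{\mathcal M}=\llbracket t\rrbracket_{\mathcal M}$. $\mathcal E$ is the set of maps $e:\mathcal V\to[0,1)$. $\mathrm{dda}(m,e)=1-\prod_{x\in\mathcal V}(1-e(x))^{m(x)}$ (with $c^\infty=0$ for $0\le c<1$ and $1^\infty=1$). For closed substitutions, $\mathbf d(\sigma_1,\sigma_2)\in\mathcal E$ is $x\mapsto\mathbf d(\sigma_1(x),\sigma_2(x))$. *)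

theory Defs
  imports "HOL-Probability.Probability_Mass_Function" "HOL-Library.Extended_Nat"
begin

text \<open>State terms over actions 'a and state variables 'v.
  Prefix a [(t1,q1),...,(tn,qn)] is the n-ary probabilistic prefix a.(+)_i [q_i] t_i;
  Par B t1 t2 is t1 ||_B t2.\<close>
datatype ('a, 'v) pterm =
    Nil
  | Var 'v
  | Prefix 'a "(('a, 'v) pterm \<times> real) list"
  | Plus "('a, 'v) pterm" "('a, 'v) pterm"
  | Par "'a set" "('a, 'v) pterm" "('a, 'v) pterm"

definition valid_weights :: "('b \<times> real) list \<Rightarrow> bool" where
  "valid_weights qs \<longleftrightarrow> qs \<noteq> [] \<and> (\<forall>p\<in>set qs. 0 < snd p \<and> snd p \<le> 1)
      \<and> sum_list (map snd qs) = 1"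

text \<open>Well-formed terms: every prefix operator used belongs to the signature.\<close>
fun wf_term :: "('a, 'v) pterm \<Rightarrow> bool" where
  "wf_term Nil = True"
| "wf_term (Var x) = True"
| "wf_term (Prefix a qs) = (valid_weights qs \<and> (\<forall>p\<in>set qs. wf_term (fst p)))"
| "wf_term (Plus t u) = (wf_term t \<and> wf_term u)"
| "wf_term (Par B t u) = (wf_term t \<and> wf_term u)"

fun vars :: "('a, 'v) pterm \<Rightarrow> 'v set" where
  "vars Nil = {}"
| "vars (Var x) = {x}"
| "vars (Prefix a qs) = (\<Union>p\<in>set qs. vars (fst p))"
| "vars (Plus t u) = vars t \<union> vars u"
| "vars (Par B t u) = vars t \<union> vars u"

definition procs :: "('a, 'v) pterm set" where
  "procs = {t. wf_term t \<and> vars t = {}}"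

fun subst :: "('v \<Rightarrow> ('a, 'v) pterm) \<Rightarrow> ('a, 'v) pterm \<Rightarrow> ('a, 'v) pterm" where
  "subst \<sigma> Nil = Nil"
| "subst \<sigma> (Var x) = \<sigma> x"
| "subst \<sigma> (Prefix a qs) = Prefix a (map (\<lambda>p. (subst \<sigma> (fst p), snd p)) qs)"
| "subst \<sigma> (Plus t u) = Plus (subst \<sigma> t) (subst \<sigma> u)"
| "subst \<sigma> (Par B t u) = Par B (subst \<sigma> t) (subst \<sigma> u)"

definition closed_subst :: "('v \<Rightarrow> ('a, 'v) pterm) \<Rightarrow> bool" where
  "closed_subst \<sigma> \<longleftrightarrow> (\<forall>x. \<sigma> x \<in> procs)"

section \<open>Operational semantics (the PGSOS rules of P_PA; no negative premises,
  so the supported model is the inductively generated one)\<close>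

inductive step :: "('a, 'v) pterm \<Rightarrow> 'a \<Rightarrow> ('a, 'v) pterm pmf \<Rightarrow> bool" where
  prefix: "valid_weights qs \<Longrightarrow> step (Prefix a qs) a (pmf_of_list qs)"
| plus1: "step t1 a \<mu>1 \<Longrightarrow> step (Plus t1 t2) a \<mu>1"
| plus2: "step t2 a \<mu>2 \<Longrightarrow> step (Plus t1 t2) a \<mu>2"
| par_sync: "a \<in> B \<Longrightarrow> step t1 a \<mu>1 \<Longrightarrow> step t2 a \<mu>2 \<Longrightarrow>
     step (Par B t1 t2) a (map_pmf (\<lambda>(u, v). Par B u v) (pair_pmf \<mu>1 \<mu>2))"
| par_left: "a \<notin> B \<Longrightarrow> step t1 a \<mu>1 \<Longrightarrow>
     step (Par B t1 t2) a (map_pmf (\<lambda>u. Par B u t2) \<mu>1)"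
| par_right: "a \<notin> B \<Longrightarrow> step t2 a \<mu>2 \<Longrightarrow>
     step (Par B t1 t2) a (map_pmf (\<lambda>v. Par B t1 v) \<mu>2)"

definition der :: "('a, 'v) pterm \<Rightarrow> 'a \<Rightarrow> ('a, 'v) pterm pmf set" where
  "der t a = {\<pi>. step t a \<pi>}"

definition sup01 :: "real set \<Rightarrow> real" where
  "sup01 S = (if S = {} then 0 else Sup S)"

definition inf01 :: "real set \<Rightarrow> real" where
  "inf01 S = (if S = {} then 1 else Inf S)"

definition couplings :: "'b pmf \<Rightarrow> 'b pmf \<Rightarrow> ('b \<times> 'b) pmf set" where
  "couplings \<pi> \<pi>' = {\<omega>. map_pmf fst \<omega> = \<pi> \<and> map_pmf snd \<omega> = \<pi>'}"

text \<open>Kantorovich lifting (the minimum over couplings, written as an infimum).\<close>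
definition kantorovich :: "('b \<Rightarrow> 'b \<Rightarrow> real) \<Rightarrow> 'b pmf \<Rightarrow> 'b pmf \<Rightarrow> real" where
  "kantorovich d \<pi> \<pi>' =
     Inf ((\<lambda>\<omega>. measure_pmf.expectation \<omega> (\<lambda>(u, v). d u v)) ` couplings \<pi> \<pi>')"

definition hausdorff :: "('c \<Rightarrow> 'c \<Rightarrow> real) \<Rightarrow> 'c set \<Rightarrow> 'c set \<Rightarrow> real" where
  "hausdorff dh P1 P2 =
     max (sup01 ((\<lambda>p1. inf01 ((\<lambda>p2. dh p1 p2) ` P2)) ` P1))
         (sup01 ((\<lambda>p2. inf01 ((\<lambda>p1. dh p2 p1) ` P1)) ` P2))"

definition bisim_fun :: "(('a, 'v) pterm \<Rightarrow> ('a, 'v) pterm \<Rightarrow> real)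
    \<Rightarrow> ('a, 'v) pterm \<Rightarrow> ('a, 'v) pterm \<Rightarrow> real" where
  "bisim_fun d t t' = sup01 ((\<lambda>a. hausdorff (kantorovich d) (der t a) (der t' a)) ` UNIV)"

text \<open>The bisimilarity metric: least fixed point of bisim_fun on [0,1]^(procs x procs),
  given (Knaster-Tarski) as the pointwise infimum of all pre-fixed points.\<close>
definition bisim_metric :: "('a, 'v) pterm \<Rightarrow> ('a, 'v) pterm \<Rightarrow> real" where
  "bisim_metric t t' = Inf {d t t' | d.
      (\<forall>u\<in>procs. \<forall>v\<in>procs. 0 \<le> d u v \<and> d u v \<le> 1) \<and>
      (\<forall>u\<in>procs. \<forall>v\<in>procs. bisim_fun d u v \<le> d u v)}"

inductive deterministic :: "('a, 'v) pterm \<Rightarrow> bool" where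
  "deterministic Nil"
| "deterministic (Var x)"
| "deterministic t \<Longrightarrow> deterministic (Prefix a [(t, 1)])"
| "deterministic t \<Longrightarrow> deterministic u \<Longrightarrow> deterministic (Par UNIV t u)"

text \<open>Multiplicity semantics (only meaningful on deterministic terms;
  other constructors are mapped to 0 arbitrarily).\<close>
fun mult :: "('a, 'v) pterm \<Rightarrow> 'v \<Rightarrow> enat" where
  "mult Nil = (\<lambda>x. 0)"
| "mult (Var y) = (\<lambda>x. if x = y then 1 else 0)"
| "mult (Prefix a qs) = (case qs of [(t, q)] \<Rightarrow> mult t | _ \<Rightarrow> (\<lambda>x. 0))"
| "mult (Plus t u) = (\<lambda>x. 0)"
| "mult (Par B t u) = (if B = UNIV then (\<lambda>x. mult t x + mult u x) else (\<lambda>x. 0))"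

text \<open>c ^ m for m in N u {infinity}, with c^infinity = 0 for 0 <= c < 1 and 1^infinity = 1.\<close>
definition epow :: "real \<Rightarrow> enat \<Rightarrow> real" where
  "epow c m = (case m of enat n \<Rightarrow> c ^ n | \<infinity> \<Rightarrow> (if c = 1 then 1 else 0))"

text \<open>dda(m,e) = 1 - prod_x (1 - e x)^(m x); the (possibly infinite) product of factors in
  [0,1] is the infimum of its finite partial products.\<close>
definition dda :: "('v \<Rightarrow> enat) \<Rightarrow> ('v \<Rightarrow> real) \<Rightarrow> real" where
  "dda m e = 1 - Inf {(\<Prod>x\<in>F. epow (1 - e x) (m x)) | F. finite F}"

end

theory Submission
  imports Defs
begin


lemma procs_Par[simp]: "Par B t u \<in> procs \<longleftrightarrow> t \<in> procs \<and> u \<in> procs"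
  by (auto simp: procs_def)

lemma valid_weights_wf: "valid_weights qs \<Longrightarrow> pmf_of_list_wf qs"
  unfolding valid_weights_def pmf_of_list_wf_def by auto

lemma procs_Prefix: "Prefix a qs \<in> procs \<Longrightarrow> p \<in> set qs \<Longrightarrow> fst p \<in> procs"
  unfolding procs_def by auto

lemma procs_Plus: "Plus t u \<in> procs \<Longrightarrow> t \<in> procs \<and> u \<in> procs"
  unfolding procs_def by simp

lemma step_procs: "step u a \<pi> \<Longrightarrow> u \<in> procs \<Longrightarrow> set_pmf \<pi> \<subseteq> procs"
proof (induction rule: step.induct)
  case (prefix qs a)
  have "set_pmf (pmf_of_list qs) \<subseteq> set (map fst qs)"
    using set_pmf_of_list[OF valid_weights_wf[OF prefix(1)]] .
  moreover have "set (map fst qs) \<subseteq> procs"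
    using procs_Prefix[OF prefix(2)] by auto
  ultimately show ?case by (rule order_trans)
next
  case (plus1 t1 a \<mu>1 t2) then show ?case using procs_Plus by blast
next
  case (plus2 t2 a \<mu>2 t1) then show ?case using procs_Plus by blast
next
  case (par_sync a B t1 \<mu>1 t2 \<mu>2)
  have "set_pmf \<mu>1 \<subseteq> procs" "set_pmf \<mu>2 \<subseteq> procs" using par_sync by simp_all
  then show ?case
  proof (clarsimp)
    fix x y assume "x \<in> set_pmf \<mu>1" "y \<in> set_pmf \<mu>2"
    then show "x \<in> procs \<and> y \<in> procs" using \<open>set_pmf \<mu>1 \<subseteq> procs\<close> \<open>set_pmf \<mu>2 \<subseteq> procs\<close> by blast
  qed
next
  case (par_left a B t1 \<mu>1 t2)
  have "set_pmf \<mu>1 \<subseteq> procs" "t2 \<in> procs" using par_left by simp_all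
  then show ?case by auto
next
  case (par_right a B t2 \<mu>2 t1)
  have "set_pmf \<mu>2 \<subseteq> procs" "t1 \<in> procs" using par_right by simp_all
  then show ?case by auto
qed

lemma der_procs: "\<pi> \<in> der u a \<Longrightarrow> u \<in> procs \<Longrightarrow> set_pmf \<pi> \<subseteq> procs"
  by (simp add: der_def step_procs)

definition bnd :: "(('a, 'v) pterm \<Rightarrow> ('a, 'v) pterm \<Rightarrow> real) \<Rightarrow> bool" where
  "bnd d \<longleftrightarrow> (\<forall>u\<in>procs. \<forall>v\<in>procs. 0 \<le> d u v \<and> d u v \<le> 1)"

abbreviation E :: "(('a, 'v) pterm \<times> ('a, 'v) pterm) pmf \<Rightarrow> (('a, 'v) pterm \<Rightarrow> ('a, 'v) pterm \<Rightarrow> real) \<Rightarrow> real" where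
  "E \<omega> d \<equiv> measure_pmf.expectation \<omega> (\<lambda>(u, v). d u v)"

lemma coupling_procs:
  assumes "\<omega> \<in> couplings \<pi> \<pi>'" "set_pmf \<pi> \<subseteq> procs" "set_pmf \<pi>' \<subseteq> procs"
  shows "set_pmf \<omega> \<subseteq> procs \<times> procs"
proof
  fix z assume z: "z \<in> set_pmf \<omega>"
  obtain x y where zxy: "z = (x, y)" by fastforce
  have "map_pmf fst \<omega> = \<pi>" "map_pmf snd \<omega> = \<pi>'" using assms(1) by (auto simp: couplings_def)
  then have "set_pmf \<pi> = fst ` set_pmf \<omega>" "set_pmf \<pi>' = snd ` set_pmf \<omega>" by (metis set_map_pmf)+
  then show "z \<in> procs \<times> procs" using assms z zxy by force
qed

lemma E_props:
  assumes "bnd d" "set_pmf \<omega> \<subseteq> procs \<times> procs"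
  shows "integrable (measure_pmf \<omega>) (\<lambda>(u, v). d u v)" "0 \<le> E \<omega> d" "E \<omega> d \<le> 1"
proof -
  have ae: "AE z in measure_pmf \<omega>. 0 \<le> (\<lambda>(u, v). d u v) z \<and> (\<lambda>(u, v). d u v) z \<le> 1"
    using assms by (auto simp: AE_measure_pmf_iff bnd_def)
  show i: "integrable (measure_pmf \<omega>) (\<lambda>(u, v). d u v)"
    by (rule measure_pmf.integrable_const_bound[where B=1]) (use ae in auto)
  show "0 \<le> E \<omega> d"
    by (rule measure_pmf.integral_ge_const[OF i]) (use ae in auto)
  show "E \<omega> d \<le> 1"
    by (rule measure_pmf.integral_le_const[OF i]) (use ae in auto)
qed

lemma couplings_ne: "pair_pmf \<pi> \<pi>' \<in> couplings \<pi> \<pi>'"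
  by (simp add: couplings_def map_fst_pair_pmf map_snd_pair_pmf)

lemma K_le:
  assumes "bnd d" "set_pmf \<pi> \<subseteq> procs" "set_pmf \<pi>' \<subseteq> procs" "\<omega> \<in> couplings \<pi> \<pi>'"
  shows "kantorovich d \<pi> \<pi>' \<le> E \<omega> d"
  unfolding kantorovich_def
proof (rule cInf_lower)
  show "E \<omega> d \<in> (\<lambda>\<omega>. E \<omega> d) ` couplings \<pi> \<pi>'" using assms(4) by blast
  show "bdd_below ((\<lambda>\<omega>. E \<omega> d) ` couplings \<pi> \<pi>')"
  proof (rule bdd_belowI[where m=0])
    fix x assume "x \<in> (\<lambda>\<omega>. E \<omega> d) ` couplings \<pi> \<pi>'"
    then obtain \<omega>' where w: "\<omega>' \<in> couplings \<pi> \<pi>'" "x = E \<omega>' d" by blast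
    show "0 \<le> x" using E_props(2)[OF assms(1) coupling_procs[OF w(1) assms(2,3)]] w(2) by simp
  qed
qed

lemma K_bounds:
  assumes "bnd d" "set_pmf \<pi> \<subseteq> procs" "set_pmf \<pi>' \<subseteq> procs"
  shows "0 \<le> kantorovich d \<pi> \<pi>'" "kantorovich d \<pi> \<pi>' \<le> 1"
proof -
  show "0 \<le> kantorovich d \<pi> \<pi>'"
    unfolding kantorovich_def
  proof (rule cInf_greatest)
    show "(\<lambda>\<omega>. E \<omega> d) ` couplings \<pi> \<pi>' \<noteq> {}" using couplings_ne by blast
    fix x assume "x \<in> (\<lambda>\<omega>. E \<omega> d) ` couplings \<pi> \<pi>'"
    then obtain \<omega>' where w: "\<omega>' \<in> couplings \<pi> \<pi>'" "x = E \<omega>' d" by blast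
    show "0 \<le> x" using E_props(2)[OF assms(1) coupling_procs[OF w(1) assms(2,3)]] w(2) by simp
  qed
  have "kantorovich d \<pi> \<pi>' \<le> E (pair_pmf \<pi> \<pi>') d"
    by (rule K_le[OF assms couplings_ne])
  also have "\<dots> \<le> 1"
    using E_props(3)[OF assms(1) coupling_procs[OF couplings_ne assms(2,3)]] .
  finally show "kantorovich d \<pi> \<pi>' \<le> 1" .
qed

lemma K_approx:
  assumes "bnd d" "set_pmf \<pi> \<subseteq> procs" "set_pmf \<pi>' \<subseteq> procs" "0 < e"
  shows "\<exists>\<omega>\<in>couplings \<pi> \<pi>'. E \<omega> d < kantorovich d \<pi> \<pi>' + e"
proof -
  have "Inf ((\<lambda>\<omega>. E \<omega> d) ` couplings \<pi> \<pi>') < kantorovich d \<pi> \<pi>' + e"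
    using assms(4) by (simp add: kantorovich_def)
  moreover have ne: "(\<lambda>\<omega>. E \<omega> d) ` couplings \<pi> \<pi>' \<noteq> {}" using couplings_ne by blast
  ultimately have "\<exists>x\<in>(\<lambda>\<omega>. E \<omega> d) ` couplings \<pi> \<pi>'. x < kantorovich d \<pi> \<pi>' + e"
    using cInf_lessD[OF ne] by blast
  then show ?thesis by blast
qed

lemma K_mono:
  assumes "bnd d1" "bnd d2" "\<forall>u\<in>procs. \<forall>v\<in>procs. d1 u v \<le> d2 u v"
    "set_pmf \<pi> \<subseteq> procs" "set_pmf \<pi>' \<subseteq> procs"
  shows "kantorovich d1 \<pi> \<pi>' \<le> kantorovich d2 \<pi> \<pi>'"
  unfolding kantorovich_def[of d2]
proof (rule cInf_greatest)
  show "(\<lambda>\<omega>. E \<omega> d2) ` couplings \<pi> \<pi>' \<noteq> {}" using couplings_ne by blast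
  fix x assume "x \<in> (\<lambda>\<omega>. E \<omega> d2) ` couplings \<pi> \<pi>'"
  then obtain \<omega> where w: "\<omega> \<in> couplings \<pi> \<pi>'" "x = E \<omega> d2" by blast
  have sp: "set_pmf \<omega> \<subseteq> procs \<times> procs" using coupling_procs[OF w(1) assms(4,5)] .
  have "kantorovich d1 \<pi> \<pi>' \<le> E \<omega> d1" by (rule K_le[OF assms(1,4,5) w(1)])
  also have "\<dots> \<le> E \<omega> d2"
    by (rule integral_mono_AE[OF E_props(1)[OF assms(1) sp] E_props(1)[OF assms(2) sp]])
       (use sp assms(3) in \<open>auto simp: AE_measure_pmf_iff\<close>)
  finally show "kantorovich d1 \<pi> \<pi>' \<le> x" using w by simp
qed

lemma sup01_bounds: "S \<subseteq> {0..1} \<Longrightarrow> 0 \<le> sup01 S \<and> sup01 S \<le> 1"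
proof -
  assume S: "S \<subseteq> {0..1}"
  show ?thesis
  proof (cases "S = {}")
    case False
    then obtain x where x: "x \<in> S" by blast
    have bdd: "bdd_above S" by (rule bdd_aboveI[where M=1]) (use S in auto)
    have "0 \<le> Sup S" using cSup_upper[OF x bdd] x S by force
    moreover have "Sup S \<le> 1" using False S by (intro cSup_least) auto
    ultimately show ?thesis using False by (simp add: sup01_def)
  qed (simp add: sup01_def)
qed

lemma inf01_bounds: "S \<subseteq> {0..1} \<Longrightarrow> 0 \<le> inf01 S \<and> inf01 S \<le> 1"
proof -
  assume S: "S \<subseteq> {0..1}"
  show ?thesis
  proof (cases "S = {}")
    case False
    then obtain x where x: "x \<in> S" by blast
    have bdd: "bdd_below S" by (rule bdd_belowI[where m=0]) (use S in auto)
    have "Inf S \<le> 1" using cInf_lower[OF x bdd] x S by force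
    moreover have "0 \<le> Inf S" using False S by (intro cInf_greatest) auto
    ultimately show ?thesis using False by (simp add: inf01_def)
  qed (simp add: inf01_def)
qed

lemma sup01_upper: "x \<in> S \<Longrightarrow> S \<subseteq> {0..1} \<Longrightarrow> x \<le> sup01 S"
proof -
  assume x: "x \<in> S" and S: "S \<subseteq> {0..1}"
  have bdd: "bdd_above S" by (rule bdd_aboveI[where M=1]) (use S in auto)
  show ?thesis using x cSup_upper[OF x bdd] by (auto simp: sup01_def)
qed

lemma sup01_least: "(\<And>x. x \<in> S \<Longrightarrow> x \<le> c) \<Longrightarrow> 0 \<le> c \<Longrightarrow> sup01 S \<le> c"
  unfolding sup01_def by (cases "S = {}") (simp_all add: cSup_least)

lemma inf01_lower: "x \<in> S \<Longrightarrow> S \<subseteq> {0..1} \<Longrightarrow> inf01 S \<le> x"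
proof -
  assume x: "x \<in> S" and S: "S \<subseteq> {0..1}"
  have bdd: "bdd_below S" by (rule bdd_belowI[where m=0]) (use S in auto)
  show ?thesis using x cInf_lower[OF x bdd] by (auto simp: inf01_def)
qed

lemma inf01_greatest: "(\<And>x. x \<in> S \<Longrightarrow> c \<le> x) \<Longrightarrow> c \<le> 1 \<Longrightarrow> c \<le> inf01 S"
  unfolding inf01_def by (cases "S = {}") (simp_all add: cInf_greatest)

lemma inf01_lessD: "inf01 S < z \<Longrightarrow> z \<le> 1 \<Longrightarrow> \<exists>x\<in>S. x < z"
proof (cases "S = {}")
  case True
  then show "inf01 S < z \<Longrightarrow> z \<le> 1 \<Longrightarrow> \<exists>x\<in>S. x < z" by (simp add: inf01_def)
next
  case False
  then show "inf01 S < z \<Longrightarrow> z \<le> 1 \<Longrightarrow> \<exists>x\<in>S. x < z"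
    unfolding inf01_def using cInf_lessD[OF False] by simp
qed

lemma sup01_mono:
  assumes "\<And>x. x \<in> A \<Longrightarrow> f x \<le> g x" "\<And>x. x \<in> A \<Longrightarrow> 0 \<le> f x \<and> g x \<le> 1"
  shows "sup01 (f ` A) \<le> sup01 (g ` A)"
proof (rule sup01_least)
  have gA: "g ` A \<subseteq> {0..1}"
  proof
    fix y assume "y \<in> g ` A"
    then obtain x where x: "x \<in> A" "y = g x" by blast
    show "y \<in> {0..1}" using assms(1)[OF x(1)] assms(2)[OF x(1)] x(2) by simp
  qed
  show "0 \<le> sup01 (g ` A)" using sup01_bounds[OF gA] by simp
  fix x assume "x \<in> f ` A"
  then obtain y where y: "y \<in> A" "x = f y" by blast
  show "x \<le> sup01 (g ` A)" using y assms(1)[OF y(1)] sup01_upper[OF _ gA, of "g y"] by force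
qed

lemma inf01_mono:
  assumes "\<And>x. x \<in> A \<Longrightarrow> f x \<le> g x" "\<And>x. x \<in> A \<Longrightarrow> 0 \<le> f x \<and> g x \<le> 1"
  shows "inf01 (f ` A) \<le> inf01 (g ` A)"
proof (rule inf01_greatest)
  have fA: "f ` A \<subseteq> {0..1}"
  proof
    fix y assume "y \<in> f ` A"
    then obtain x where x: "x \<in> A" "y = f x" by blast
    show "y \<in> {0..1}" using assms(1)[OF x(1)] assms(2)[OF x(1)] x(2) by simp
  qed
  show "inf01 (f ` A) \<le> 1" using inf01_bounds[OF fA] by simp
  fix x assume "x \<in> g ` A"
  then obtain y where y: "y \<in> A" "x = g y" by blast
  show "inf01 (f ` A) \<le> x" using y assms(1)[OF y(1)] inf01_lower[OF _ fA, of "f y"] by force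
qed

lemma H_half_bounds:
  assumes "bnd d" "u \<in> procs" "v \<in> procs"
  shows "0 \<le> sup01 ((\<lambda>p1. inf01 ((\<lambda>p2. kantorovich d p1 p2) ` der v a)) ` der u a)
     \<and> sup01 ((\<lambda>p1. inf01 ((\<lambda>p2. kantorovich d p1 p2) ` der v a)) ` der u a) \<le> 1"
proof (rule sup01_bounds, clarify)
  fix p1 assume p1: "p1 \<in> der u a"
  have "(\<lambda>p2. kantorovich d p1 p2) ` der v a \<subseteq> {0..1}"
    using K_bounds[OF assms(1) der_procs[OF p1 assms(2)] der_procs[OF _ assms(3)]] by auto
  from inf01_bounds[OF this]
  show "inf01 ((\<lambda>p2. kantorovich d p1 p2) ` der v a) \<in> {0..1}" by simp
qed

lemma H_bounds:
  assumes "bnd d" "u \<in> procs" "v \<in> procs"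
  shows "0 \<le> hausdorff (kantorovich d) (der u a) (der v a) \<and> hausdorff (kantorovich d) (der u a) (der v a) \<le> 1"
  using H_half_bounds[OF assms, of a] H_half_bounds[OF assms(1,3,2), of a]
  unfolding hausdorff_def by auto

lemma B_bounds:
  assumes "bnd d" "u \<in> procs" "v \<in> procs"
  shows "0 \<le> bisim_fun d u v \<and> bisim_fun d u v \<le> 1"
  unfolding bisim_fun_def using H_bounds[OF assms] by (intro sup01_bounds) auto

lemma H_half_mono:
  assumes "bnd d1" "bnd d2" "\<forall>u\<in>procs. \<forall>v\<in>procs. d1 u v \<le> d2 u v" "u \<in> procs" "v \<in> procs"
  shows "sup01 ((\<lambda>p1. inf01 ((\<lambda>p2. kantorovich d1 p1 p2) ` der v a)) ` der u a)
     \<le> sup01 ((\<lambda>p1. inf01 ((\<lambda>p2. kantorovich d2 p1 p2) ` der v a)) ` der u a)"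
proof (rule sup01_mono)
  fix p1 assume p1: "p1 \<in> der u a"
  note s1 = der_procs[OF p1 assms(4)]
  note s2 = der_procs[OF _ assms(5)]
  show "inf01 ((\<lambda>p2. kantorovich d1 p1 p2) ` der v a) \<le> inf01 ((\<lambda>p2. kantorovich d2 p1 p2) ` der v a)"
    by (rule inf01_mono) (use K_mono[OF assms(1-3) s1 s2] K_bounds[OF assms(1) s1 s2] K_bounds[OF assms(2) s1 s2] in auto)
  have A: "(\<lambda>p2. kantorovich d1 p1 p2) ` der v a \<subseteq> {0..1}" "(\<lambda>p2. kantorovich d2 p1 p2) ` der v a \<subseteq> {0..1}"
    using K_bounds[OF assms(1) s1 s2] K_bounds[OF assms(2) s1 s2] by auto
  show "0 \<le> inf01 ((\<lambda>p2. kantorovich d1 p1 p2) ` der v a) \<and> inf01 ((\<lambda>p2. kantorovich d2 p1 p2) ` der v a) \<le> 1"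
    using inf01_bounds[OF A(1)] inf01_bounds[OF A(2)] by simp
qed

lemma B_mono:
  assumes "bnd d1" "bnd d2" "\<forall>u\<in>procs. \<forall>v\<in>procs. d1 u v \<le> d2 u v" "u \<in> procs" "v \<in> procs"
  shows "bisim_fun d1 u v \<le> bisim_fun d2 u v"
  unfolding bisim_fun_def
proof (rule sup01_mono)
  fix a :: 'a
  show "hausdorff (kantorovich d1) (der u a) (der v a) \<le> hausdorff (kantorovich d2) (der u a) (der v a)"
    unfolding hausdorff_def
    by (rule max.mono[OF H_half_mono[OF assms, of a] H_half_mono[OF assms(1-3) assms(5,4), of a]])
  show "0 \<le> hausdorff (kantorovich d1) (der u a) (der v a) \<and> hausdorff (kantorovich d2) (der u a) (der v a) \<le> 1"
    using H_bounds[OF assms(1,4,5)] H_bounds[OF assms(2,4,5)] by simp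
qed

definition prefixed :: "(('a, 'v) pterm \<Rightarrow> ('a, 'v) pterm \<Rightarrow> real) \<Rightarrow> bool" where
  "prefixed d \<longleftrightarrow> (\<forall>u\<in>procs. \<forall>v\<in>procs. bisim_fun d u v \<le> d u v)"

lemma one_bnd: "bnd (\<lambda>_ _. 1::real)" by (simp add: bnd_def)

lemma one_prefixed: "prefixed (\<lambda>_ _. 1::real)"
  unfolding prefixed_def
proof (intro ballI)
  fix u v :: "('a, 'b) pterm" assume "u \<in> procs" "v \<in> procs"
  then show "bisim_fun (\<lambda>_ _. 1) u v \<le> 1" using B_bounds[OF one_bnd] by blast
qed

lemma bm_set_ne: "{d u v | d. bnd d \<and> prefixed d} \<noteq> {}"
proof -
  note one_bnd one_prefixed
  then show ?thesis by blast
qed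

lemma bm_def': "bisim_metric u v = Inf {d u v | d. bnd d \<and> prefixed d}"
  unfolding bisim_metric_def bnd_def prefixed_def by simp

lemma bm_le: "bnd d \<Longrightarrow> prefixed d \<Longrightarrow> u \<in> procs \<Longrightarrow> v \<in> procs \<Longrightarrow> bisim_metric u v \<le> d u v"
  unfolding bm_def'
  by (rule cInf_lower) (auto intro!: bdd_belowI[where m=0] simp: bnd_def)

lemma bm_bnd: "bnd bisim_metric"
  unfolding bnd_def
proof (intro ballI conjI)
  fix u v :: "('a, 'b) pterm" assume uv: "u \<in> procs" "v \<in> procs"
  show "0 \<le> bisim_metric u v" unfolding bm_def'
    by (rule cInf_greatest[OF bm_set_ne]) (use uv in \<open>auto simp: bnd_def\<close>)
  note one_bnd one_prefixed
  then show "bisim_metric u v \<le> 1" using bm_le[of "\<lambda>_ _. 1" u v] uv by simp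
qed

lemma bm_prefixed: "prefixed bisim_metric"
  unfolding prefixed_def
proof (intro ballI)
  fix u v :: "('a, 'b) pterm" assume uv: "u \<in> procs" "v \<in> procs"
  show "bisim_fun bisim_metric u v \<le> bisim_metric u v"
    unfolding bm_def'[of u v]
  proof (rule cInf_greatest[OF bm_set_ne])
    fix x assume "x \<in> {d u v | d. bnd d \<and> prefixed d}"
    then obtain d where d: "bnd d" "prefixed d" "x = d u v" by blast
    have "bisim_fun bisim_metric u v \<le> bisim_fun d u v"
      by (rule B_mono[OF bm_bnd d(1) _ uv]) (use bm_le d in blast)
    also have "\<dots> \<le> d u v" using d(2) uv by (simp add: prefixed_def)
    finally show "bisim_fun bisim_metric u v \<le> x" using d by simp
  qed
qed



lemma F_pert:
  fixes a b c d e :: real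
  assumes "0 \<le> a" "a \<le> 1" "0 \<le> b" "b \<le> 1" "0 \<le> c" "c \<le> 1" "0 \<le> d" "d \<le> 1"
    "a \<le> c + e" "b \<le> d + e" "0 \<le> e"
  shows "a + b - a * b \<le> c + d - c * d + 2 * e"
proof -
  have h1: "(a - c) * (1 - b) \<le> e"
  proof (cases "a \<le> c")
    case True
    have "(a - c) * (1 - b) \<le> 0" by (rule mult_nonpos_nonneg) (use True assms in auto)
    then show ?thesis using assms by linarith
  next
    case False
    have "(a - c) * (1 - b) \<le> (a - c) * 1" using False assms by (intro mult_left_mono) auto
    then show ?thesis using assms by simp
  qed
  have h2: "(b - d) * (1 - c) \<le> e"
  proof (cases "b \<le> d")
    case True
    have "(b - d) * (1 - c) \<le> 0" by (rule mult_nonpos_nonneg) (use True assms in auto)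
    then show ?thesis using assms by linarith
  next
    case False
    have "(b - d) * (1 - c) \<le> (b - d) * 1" using False assms by (intro mult_left_mono) auto
    then show ?thesis using assms by simp
  qed
  have "a + b - a * b - (c + d - c * d) = (a - c) * (1 - b) + (b - d) * (1 - c)"
    by (simp add: algebra_simps)
  then show ?thesis using h1 h2 by linarith
qed

lemma pair_expect_mult:
  fixes f :: "'a \<Rightarrow> real" and g :: "'b \<Rightarrow> real"
  assumes f: "\<And>x. 0 \<le> f x \<and> f x \<le> 1" and g: "\<And>y. 0 \<le> g y \<and> g y \<le> 1"
  shows "measure_pmf.expectation (pair_pmf A B) (\<lambda>z. f (fst z) * g (snd z))
       = measure_pmf.expectation A f * measure_pmf.expectation B g"
proof -
  have iA: "integrable (measure_pmf A) f"
    by (rule measure_pmf.integrable_const_bound[where B=1]) (use f in auto)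
  have iB: "integrable (measure_pmf B) g"
    by (rule measure_pmf.integrable_const_bound[where B=1]) (use g in auto)
  have iP: "integrable (measure_pmf (pair_pmf A B)) (\<lambda>z. f (fst z) * g (snd z))"
    by (rule measure_pmf.integrable_const_bound[where B=1])
       (use f g in \<open>auto intro!: mult_le_one simp: abs_mult\<close>)
  have nA: "0 \<le> measure_pmf.expectation A f" using f by (simp add: integral_nonneg_AE)
  have nB: "0 \<le> measure_pmf.expectation B g" using g by (simp add: integral_nonneg_AE)
  have nP: "0 \<le> measure_pmf.expectation (pair_pmf A B) (\<lambda>z. f (fst z) * g (snd z))"
    using f g by (simp add: integral_nonneg_AE)
  have "ennreal (measure_pmf.expectation (pair_pmf A B) (\<lambda>z. f (fst z) * g (snd z)))
      = (\<integral>\<^sup>+z. ennreal (f (fst z) * g (snd z)) \<partial>pair_pmf A B)"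
    by (rule nn_integral_eq_integral[symmetric]) (use iP f g in auto)
  also have "\<dots> = (\<integral>\<^sup>+a. \<integral>\<^sup>+b. ennreal (f a) * ennreal (g b) \<partial>B \<partial>A)"
    by (simp add: nn_integral_pair_pmf' ennreal_mult f g)
  also have "\<dots> = (\<integral>\<^sup>+a. ennreal (f a) * (\<integral>\<^sup>+b. ennreal (g b) \<partial>B) \<partial>A)"
    by (simp add: nn_integral_cmult)
  also have "\<dots> = (\<integral>\<^sup>+a. ennreal (f a) \<partial>A) * (\<integral>\<^sup>+b. ennreal (g b) \<partial>B)"
    by (simp add: nn_integral_multc)
  also have "\<dots> = ennreal (measure_pmf.expectation A f) * ennreal (measure_pmf.expectation B g)"
    using nn_integral_eq_integral[OF iA] nn_integral_eq_integral[OF iB] f g by simp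
  also have "\<dots> = ennreal (measure_pmf.expectation A f * measure_pmf.expectation B g)"
    by (simp add: ennreal_mult nA nB)
  finally show ?thesis using nP nA nB by (simp add: ennreal_inj)
qed



datatype ('a, 'v) wt = WNil | WLeaf bool "('a, 'v) pterm" "('a, 'v) pterm"
  | WPre 'a "('a, 'v) wt" | WPar "('a, 'v) wt" "('a, 'v) wt"

fun lt :: "('a, 'v) wt \<Rightarrow> ('a, 'v) pterm" where
  "lt WNil = Nil"
| "lt (WLeaf b p q) = (if b then p else q)"
| "lt (WPre a w) = Prefix a [(lt w, 1)]"
| "lt (WPar w1 w2) = Par UNIV (lt w1) (lt w2)"

fun rt :: "('a, 'v) wt \<Rightarrow> ('a, 'v) pterm" where
  "rt WNil = Nil"
| "rt (WLeaf b p q) = (if b then q else p)"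
| "rt (WPre a w) = Prefix a [(rt w, 1)]"
| "rt (WPar w1 w2) = Par UNIV (rt w1) (rt w2)"

fun swp :: "('a, 'v) wt \<Rightarrow> ('a, 'v) wt" where
  "swp WNil = WNil"
| "swp (WLeaf b p q) = WLeaf (\<not> b) p q"
| "swp (WPre a w) = WPre a (swp w)"
| "swp (WPar w1 w2) = WPar (swp w1) (swp w2)"

fun valid :: "('a, 'v) wt \<Rightarrow> bool" where
  "valid WNil = True"
| "valid (WLeaf b p q) = (p \<in> procs \<and> q \<in> procs \<and> bisim_metric p q < 1)"
| "valid (WPre a w) = valid w"
| "valid (WPar w1 w2) = (valid w1 \<and> valid w2)"

fun PV :: "('a, 'v) wt \<Rightarrow> real" where
  "PV WNil = 1"
| "PV (WLeaf b p q) = 1 - bisim_metric p q"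
| "PV (WPre a w) = PV w"
| "PV (WPar w1 w2) = PV w1 * PV w2"

lemma swp_simps[simp]: "lt (swp w) = rt w" "rt (swp w) = lt w" "valid (swp w) = valid w" "PV (swp w) = PV w"
  by (induction w) auto

lemma procs_Nil[simp]: "Nil \<in> procs"
  by (simp add: procs_def)

lemma valid_weights_single[simp]: "valid_weights [(t, 1)]"
  by (simp add: valid_weights_def)

lemma procs_Prefix1[simp]: "Prefix a [(t, 1)] \<in> procs \<longleftrightarrow> t \<in> procs"
  by (simp add: procs_def)

lemma valid_procs: "valid w \<Longrightarrow> lt w \<in> procs \<and> rt w \<in> procs"
  by (induction w) auto

lemma bm_01: "u \<in> procs \<Longrightarrow> v \<in> procs \<Longrightarrow> 0 \<le> bisim_metric u v \<and> bisim_metric u v \<le> 1"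
  using bm_bnd unfolding bnd_def by blast

lemma valid_PV: "valid w \<Longrightarrow> 0 \<le> PV w \<and> PV w \<le> 1"
proof (induction w)
  case (WLeaf b p q) then show ?case using bm_01[of p q] by simp
next
  case (WPar w1 w2) then show ?case by (simp add: mult_le_one)
qed auto

definition dstar :: "('a, 'v) pterm \<Rightarrow> ('a, 'v) pterm \<Rightarrow> real" where
  "dstar u v = Inf (insert 1 {1 - PV w | w. valid w \<and> lt w = u \<and> rt w = v})"

lemma dstar_set: "insert 1 {1 - PV w | w. valid w \<and> lt w = u \<and> rt w = v} \<subseteq> {0..(1::real)}"
proof (intro subsetI)
  fix x assume x: "x \<in> insert 1 {1 - PV w | w. valid w \<and> lt w = u \<and> rt w = v}"
  show "x \<in> {0..1}"
  proof (cases "x = 1")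
    case False
    then have "\<exists>w. valid w \<and> lt w = u \<and> x = 1 - PV w" using x by auto
    then obtain w where "valid w" "lt w = u" "x = 1 - PV w" by blast
    with valid_PV[of w] show ?thesis by simp
  qed simp
qed

lemma bdd01: "S \<subseteq> {0..(1::real)} \<Longrightarrow> bdd_below S"
  by (rule bdd_belowI[where m=0]) auto

lemma dstar_01: "0 \<le> dstar u v \<and> dstar u v \<le> 1"
proof -
  have bdd: "bdd_below (insert 1 {1 - PV w | w. valid w \<and> lt w = u \<and> rt w = v})"
    by (rule bdd01[OF dstar_set])
  have "dstar u v \<le> 1" unfolding dstar_def by (rule cInf_lower[OF _ bdd]) simp
  moreover have "0 \<le> dstar u v" unfolding dstar_def
  proof (rule cInf_greatest)
    fix x assume "x \<in> insert 1 {1 - PV w | w. valid w \<and> lt w = u \<and> rt w = v}"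
    then have "x \<in> {0..1}" using dstar_set[of u v] by blast
    then show "0 \<le> x" by simp
  qed simp
  ultimately show ?thesis by simp
qed

lemma dstar_bnd: "bnd dstar"
  unfolding bnd_def using dstar_01 by blast

lemma dstar_tree: "valid w \<Longrightarrow> dstar (lt w) (rt w) \<le> 1 - PV w"
proof -
  assume w: "valid w"
  have bdd: "bdd_below (insert 1 {1 - PV w' | w'. valid w' \<and> lt w' = lt w \<and> rt w' = rt w})"
    by (rule bdd01[OF dstar_set])
  show ?thesis unfolding dstar_def by (rule cInf_lower[OF _ bdd]) (use w in blast)
qed

lemma dstar_le_bm: "u \<in> procs \<Longrightarrow> v \<in> procs \<Longrightarrow> dstar u v \<le> bisim_metric u v"
proof -
  assume uv: "u \<in> procs" "v \<in> procs"
  show ?thesis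
  proof (cases "bisim_metric u v < 1")
    case True
    have "valid (WLeaf True u v)" using uv True by simp
    from dstar_tree[OF this] show ?thesis by simp
  next
    case False then show ?thesis using dstar_01[of u v] by simp
  qed
qed

lemma F_Inf:
  fixes A B :: "real set"
  assumes "A \<subseteq> {0..1}" "B \<subseteq> {0..1}" "A \<noteq> {}" "B \<noteq> {}"
    "\<And>a b. a \<in> A \<Longrightarrow> b \<in> B \<Longrightarrow> z \<le> a + b - a * b"
  shows "z \<le> Inf A + Inf B - Inf A * Inf B"
proof (rule field_le_epsilon)
  fix e :: real assume e: "0 < e"
  have bA: "bdd_below A" by (rule bdd_belowI[where m=0]) (use assms in auto)
  have bB: "bdd_below B" by (rule bdd_belowI[where m=0]) (use assms in auto)
  obtain a where a: "a \<in> A" "a < Inf A + e / 2" using cInf_lessD[OF assms(3), of "Inf A + e / 2"] e by auto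
  obtain b where b: "b \<in> B" "b < Inf B + e / 2" using cInf_lessD[OF assms(4), of "Inf B + e / 2"] e by auto
  have iA: "0 \<le> Inf A \<and> Inf A \<le> 1" using cInf_lower[OF a(1) bA] a(1) assms(1,3) cInf_greatest[OF assms(3), of 0] by force
  have iB: "0 \<le> Inf B \<and> Inf B \<le> 1" using cInf_lower[OF b(1) bB] b(1) assms(2,4) cInf_greatest[OF assms(4), of 0] by force
  have "z \<le> a + b - a * b" using assms(5)[OF a(1) b(1)] .
  also have "\<dots> \<le> Inf A + Inf B - Inf A * Inf B + 2 * (e / 2)"
    by (rule F_pert) (use a b iA iB assms(1,2) e in auto)
  finally show "z \<le> Inf A + Inf B - Inf A * Inf B + e" by simp
qed

lemma dstar_par:
  "dstar (Par UNIV u1 u2) (Par UNIV v1 v2) \<le> dstar u1 v1 + dstar u2 v2 - dstar u1 v1 * dstar u2 v2"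
  unfolding dstar_def[of u1 v1] dstar_def[of u2 v2]
proof (rule F_Inf[OF dstar_set dstar_set])
  fix a b assume a: "a \<in> insert 1 {1 - PV w | w. valid w \<and> lt w = u1 \<and> rt w = v1}"
    and b: "b \<in> insert 1 {1 - PV w | w. valid w \<and> lt w = u2 \<and> rt w = v2}"
  show "dstar (Par UNIV u1 u2) (Par UNIV v1 v2) \<le> a + b - a * b"
  proof (cases "a = 1 \<or> b = 1")
    case True then show ?thesis using dstar_01[of "Par UNIV u1 u2" "Par UNIV v1 v2"] by auto
  next
    case False
    then obtain w1 w2 where w1: "valid w1" "lt w1 = u1" "rt w1 = v1" "a = 1 - PV w1"
      and w2: "valid w2" "lt w2 = u2" "rt w2 = v2" "b = 1 - PV w2" using a b by auto
    have "valid (WPar w1 w2)" using w1 w2 by simp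
    from dstar_tree[OF this] have "dstar (Par UNIV u1 u2) (Par UNIV v1 v2) \<le> 1 - PV w1 * PV w2"
      using w1 w2 by simp
    also have "\<dots> = a + b - a * b" unfolding w1(4) w2(4) by (simp add: algebra_simps)
    finally show ?thesis .
  qed
qed auto



lemma step_Nil: "step Nil a \<pi> \<Longrightarrow> False"
  by (erule step.cases) auto

lemma step_Prefix: "step (Prefix b qs) a \<pi> \<Longrightarrow> a = b \<and> \<pi> = pmf_of_list qs"
  by (erule step.cases) auto

lemma step_Par_UNIV: "step (Par UNIV t1 t2) a \<pi> \<Longrightarrow>
    \<exists>\<pi>1 \<pi>2. step t1 a \<pi>1 \<and> step t2 a \<pi>2 \<and> \<pi> = map_pmf (\<lambda>(u, v). Par UNIV u v) (pair_pmf \<pi>1 \<pi>2)"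
  by (erule step.cases) auto

lemma pol1: "pmf_of_list [(x, 1)] = return_pmf x"
proof -
  have "set_pmf (pmf_of_list [(x, 1::real)]) \<subseteq> set (map fst [(x, 1::real)])"
    by (rule set_pmf_of_list[OF valid_weights_wf[OF valid_weights_single]])
  then show ?thesis by (simp add: set_pmf_subset_singleton)
qed

lemma dstar_abs: "\<bar>dstar u v\<bar> \<le> 1"
  using dstar_01[of u v] by simp

abbreviation pm :: "('a, 'v) pterm pmf \<Rightarrow> ('a, 'v) pterm pmf \<Rightarrow> ('a, 'v) pterm pmf" where
  "pm X Y \<equiv> map_pmf (\<lambda>(u, v). Par UNIV u v) (pair_pmf X Y)"

lemma pm_procs: "set_pmf X \<subseteq> procs \<Longrightarrow> set_pmf Y \<subseteq> procs \<Longrightarrow> set_pmf (pm X Y) \<subseteq> procs"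
proof (clarsimp)
  fix x y assume "set_pmf X \<subseteq> procs" "set_pmf Y \<subseteq> procs" "x \<in> set_pmf X" "y \<in> set_pmf Y"
  then show "x \<in> procs \<and> y \<in> procs" by blast
qed

lemma intb: "(\<And>x. \<bar>f x\<bar> \<le> B) \<Longrightarrow> integrable (measure_pmf M) (f :: _ \<Rightarrow> real)"
  by (rule measure_pmf.integrable_const_bound[where B=B]) auto

lemma K_par:
  assumes s: "set_pmf \<pi>1 \<subseteq> procs" "set_pmf \<pi>1' \<subseteq> procs" "set_pmf \<pi>2 \<subseteq> procs" "set_pmf \<pi>2' \<subseteq> procs"
  shows "kantorovich dstar (pm \<pi>1 \<pi>2) (pm \<pi>1' \<pi>2')
     \<le> kantorovich dstar \<pi>1 \<pi>1' + kantorovich dstar \<pi>2 \<pi>2' - kantorovich dstar \<pi>1 \<pi>1' * kantorovich dstar \<pi>2 \<pi>2'"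
    (is "?K \<le> ?K1 + ?K2 - ?K1 * ?K2")
proof (rule field_le_epsilon)
  fix e :: real assume e: "0 < e"
  obtain \<omega>1 where w1: "\<omega>1 \<in> couplings \<pi>1 \<pi>1'" "E \<omega>1 dstar < ?K1 + e / 2"
    using K_approx[OF dstar_bnd s(1,2), of "e/2"] e by auto
  obtain \<omega>2 where w2: "\<omega>2 \<in> couplings \<pi>2 \<pi>2'" "E \<omega>2 dstar < ?K2 + e / 2"
    using K_approx[OF dstar_bnd s(3,4), of "e/2"] e by auto
  define \<omega> where "\<omega> = map_pmf (\<lambda>((a, b), (c, d)). (Par UNIV a c, Par UNIV b d)) (pair_pmf \<omega>1 \<omega>2)"
  have m1: "map_pmf fst \<omega>1 = \<pi>1" "map_pmf snd \<omega>1 = \<pi>1'" using w1(1) by (auto simp: couplings_def)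
  have m2: "map_pmf fst \<omega>2 = \<pi>2" "map_pmf snd \<omega>2 = \<pi>2'" using w2(1) by (auto simp: couplings_def)
  have "map_pmf fst \<omega> = map_pmf (\<lambda>(u, v). Par UNIV u v) (map_pmf (\<lambda>(x, y). (fst x, fst y)) (pair_pmf \<omega>1 \<omega>2))"
    unfolding \<omega>_def map_pmf_comp by (rule map_pmf_cong) auto
  also have "map_pmf (\<lambda>(x, y). (fst x, fst y)) (pair_pmf \<omega>1 \<omega>2) = pair_pmf \<pi>1 \<pi>2"
    using map_pair[of fst fst \<omega>1 \<omega>2] m1 m2 by simp
  finally have c1: "map_pmf fst \<omega> = pm \<pi>1 \<pi>2" .
  have "map_pmf snd \<omega> = map_pmf (\<lambda>(u, v). Par UNIV u v) (map_pmf (\<lambda>(x, y). (snd x, snd y)) (pair_pmf \<omega>1 \<omega>2))"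
    unfolding \<omega>_def map_pmf_comp by (rule map_pmf_cong) auto
  also have "map_pmf (\<lambda>(x, y). (snd x, snd y)) (pair_pmf \<omega>1 \<omega>2) = pair_pmf \<pi>1' \<pi>2'"
    using map_pair[of snd snd \<omega>1 \<omega>2] m1 m2 by simp
  finally have c2: "map_pmf snd \<omega> = pm \<pi>1' \<pi>2'" .
  have cpl: "\<omega> \<in> couplings (pm \<pi>1 \<pi>2) (pm \<pi>1' \<pi>2')" using c1 c2 by (simp add: couplings_def)
  define g :: "('a, 'b) pterm \<times> ('a, 'b) pterm \<Rightarrow> real" where "g = (\<lambda>(u, v). dstar u v)"
  have g01: "\<And>x. 0 \<le> g x \<and> g x \<le> 1" unfolding g_def using dstar_01 by (simp add: split_beta)
  have "?K \<le> E \<omega> dstar" by (rule K_le[OF dstar_bnd pm_procs[OF s(1,3)] pm_procs[OF s(2,4)] cpl])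
  also have "E \<omega> dstar = measure_pmf.expectation (pair_pmf \<omega>1 \<omega>2)
      (\<lambda>z. dstar (Par UNIV (fst (fst z)) (fst (snd z))) (Par UNIV (snd (fst z)) (snd (snd z))))"
    unfolding \<omega>_def integral_map_pmf by (simp add: split_beta)
  also have "\<dots> \<le> measure_pmf.expectation (pair_pmf \<omega>1 \<omega>2)
      (\<lambda>z. g (fst z) + g (snd z) - g (fst z) * g (snd z))"
  proof (rule integral_mono)
    show "integrable (measure_pmf (pair_pmf \<omega>1 \<omega>2))
      (\<lambda>z. dstar (Par UNIV (fst (fst z)) (fst (snd z))) (Par UNIV (snd (fst z)) (snd (snd z))))"
      by (rule intb[where B=1]) (simp add: dstar_abs)
    show "integrable (measure_pmf (pair_pmf \<omega>1 \<omega>2)) (\<lambda>z. g (fst z) + g (snd z) - g (fst z) * g (snd z))"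
    proof (rule intb[where B=3])
      fix z
      have a: "0 \<le> g (fst z)" "g (fst z) \<le> 1" "0 \<le> g (snd z)" "g (snd z) \<le> 1" using g01 by auto
      have b: "0 \<le> g (fst z) * g (snd z)" "g (fst z) * g (snd z) \<le> 1"
        using a by (auto intro: mult_le_one)
      show "\<bar>g (fst z) + g (snd z) - g (fst z) * g (snd z)\<bar> \<le> 3"
        unfolding abs_le_iff using a b by linarith
    qed
    fix z :: "(('a, 'b) pterm \<times> ('a, 'b) pterm) \<times> (('a, 'b) pterm \<times> ('a, 'b) pterm)"
    show "dstar (Par UNIV (fst (fst z)) (fst (snd z))) (Par UNIV (snd (fst z)) (snd (snd z)))
      \<le> g (fst z) + g (snd z) - g (fst z) * g (snd z)"
      unfolding g_def using dstar_par by (simp add: split_beta)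
  qed
  also have "\<dots> = E \<omega>1 dstar + E \<omega>2 dstar - E \<omega>1 dstar * E \<omega>2 dstar"
  proof -
    have i1: "integrable (measure_pmf (pair_pmf \<omega>1 \<omega>2)) (\<lambda>z. g (fst z))"
      by (rule intb[where B=1]) (use g01 in auto)
    have i2: "integrable (measure_pmf (pair_pmf \<omega>1 \<omega>2)) (\<lambda>z. g (snd z))"
      by (rule intb[where B=1]) (use g01 in auto)
    have i3: "integrable (measure_pmf (pair_pmf \<omega>1 \<omega>2)) (\<lambda>z. g (fst z) * g (snd z))"
    proof (rule intb[where B=1])
      fix z show "\<bar>g (fst z) * g (snd z)\<bar> \<le> 1"
        using g01[of "fst z"] g01[of "snd z"] by (auto simp: abs_mult intro: mult_le_one)
    qed
    have "measure_pmf.expectation (pair_pmf \<omega>1 \<omega>2) (\<lambda>z. g (fst z) + g (snd z) - g (fst z) * g (snd z))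
       = measure_pmf.expectation (pair_pmf \<omega>1 \<omega>2) (\<lambda>z. g (fst z))
       + measure_pmf.expectation (pair_pmf \<omega>1 \<omega>2) (\<lambda>z. g (snd z))
       - measure_pmf.expectation (pair_pmf \<omega>1 \<omega>2) (\<lambda>z. g (fst z) * g (snd z))"
      using i1 i2 i3 by simp
    also have "\<dots> = measure_pmf.expectation \<omega>1 g + measure_pmf.expectation \<omega>2 g
       - measure_pmf.expectation \<omega>1 g * measure_pmf.expectation \<omega>2 g"
      using pair_expect_mult[of g g \<omega>1 \<omega>2] g01 by simp
    finally show ?thesis unfolding g_def .
  qed
  also have "\<dots> \<le> ?K1 + ?K2 - ?K1 * ?K2 + 2 * (e / 2)"
  proof (rule F_pert)
    have sw1: "set_pmf \<omega>1 \<subseteq> procs \<times> procs" by (rule coupling_procs[OF w1(1) s(1,2)])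
    have sw2: "set_pmf \<omega>2 \<subseteq> procs \<times> procs" by (rule coupling_procs[OF w2(1) s(3,4)])
    show "0 \<le> E \<omega>1 dstar" "E \<omega>1 dstar \<le> 1" using E_props[OF dstar_bnd sw1] by auto
    show "0 \<le> E \<omega>2 dstar" "E \<omega>2 dstar \<le> 1" using E_props[OF dstar_bnd sw2] by auto
    show "0 \<le> ?K1" "?K1 \<le> 1" using K_bounds[OF dstar_bnd s(1,2)] by auto
    show "0 \<le> ?K2" "?K2 \<le> 1" using K_bounds[OF dstar_bnd s(3,4)] by auto
    show "E \<omega>1 dstar \<le> ?K1 + e / 2" "E \<omega>2 dstar \<le> ?K2 + e / 2" using w1 w2 by auto
    show "0 \<le> e / 2" using e by simp
  qed
  finally show "?K \<le> ?K1 + ?K2 - ?K1 * ?K2 + e" by simp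
qed



lemma half_match:
  assumes "bnd d" "u \<in> procs" "v \<in> procs" "\<pi> \<in> der u a"
    "sup01 ((\<lambda>p1. inf01 ((\<lambda>p2. kantorovich d p1 p2) ` der v a)) ` der u a) \<le> c" "c < 1" "0 < e"
  shows "\<exists>\<pi>'\<in>der v a. kantorovich d \<pi> \<pi>' < c + e"
proof -
  have in01: "inf01 ((\<lambda>p2. kantorovich d p1 p2) ` der v a) \<in> {0..1}" if p1: "p1 \<in> der u a" for p1
  proof -
    have "(\<lambda>p2. kantorovich d p1 p2) ` der v a \<subseteq> {0..1}"
      using K_bounds[OF assms(1) der_procs[OF p1 assms(2)] der_procs[OF _ assms(3)]] by auto
    from inf01_bounds[OF this] show ?thesis by simp
  qed
  have "(\<lambda>p1. inf01 ((\<lambda>p2. kantorovich d p1 p2) ` der v a)) ` der u a \<subseteq> {0..1}"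
    using in01 by blast
  from sup01_upper[OF _ this, of "inf01 ((\<lambda>p2. kantorovich d \<pi> p2) ` der v a)"] assms(4)
  have "inf01 ((\<lambda>p2. kantorovich d \<pi> p2) ` der v a) \<le> c" using assms(5) by force
  then have "inf01 ((\<lambda>p2. kantorovich d \<pi> p2) ` der v a) < min (c + e) 1" using assms(6,7) by simp
  from inf01_lessD[OF this] obtain x where "x \<in> (\<lambda>p2. kantorovich d \<pi> p2) ` der v a" "x < min (c + e) 1"
    by auto
  then show ?thesis by force
qed

lemma haus_le_B:
  assumes "bnd d" "u \<in> procs" "v \<in> procs"
  shows "hausdorff (kantorovich d) (der u a) (der v a) \<le> bisim_fun d u v"
  unfolding bisim_fun_def
  by (rule sup01_upper) (use H_bounds[OF assms] in auto)

lemma match1: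
  assumes "bnd d" "u \<in> procs" "v \<in> procs" "\<pi> \<in> der u a" "bisim_fun d u v \<le> c" "c < 1" "0 < e"
  shows "\<exists>\<pi>'\<in>der v a. kantorovich d \<pi> \<pi>' < c + e"
proof (rule half_match[OF assms(1-4) _ assms(6,7)])
  have "sup01 ((\<lambda>p1. inf01 ((\<lambda>p2. kantorovich d p1 p2) ` der v a)) ` der u a)
     \<le> hausdorff (kantorovich d) (der u a) (der v a)" unfolding hausdorff_def by simp
  also have "\<dots> \<le> c" using haus_le_B[OF assms(1-3), of a] assms(5) by simp
  finally show "sup01 ((\<lambda>p1. inf01 ((\<lambda>p2. kantorovich d p1 p2) ` der v a)) ` der u a) \<le> c" .
qed

lemma match2:
  assumes "bnd d" "u \<in> procs" "v \<in> procs" "\<pi> \<in> der v a" "bisim_fun d u v \<le> c" "c < 1" "0 < e"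
  shows "\<exists>\<pi>'\<in>der u a. kantorovich d \<pi> \<pi>' < c + e"
proof (rule half_match[OF assms(1,3,2,4) _ assms(6,7)])
  have "sup01 ((\<lambda>p1. inf01 ((\<lambda>p2. kantorovich d p1 p2) ` der u a)) ` der v a)
     \<le> hausdorff (kantorovich d) (der u a) (der v a)" unfolding hausdorff_def by simp
  also have "\<dots> \<le> c" using haus_le_B[OF assms(1-3), of a] assms(5) by simp
  finally show "sup01 ((\<lambda>p1. inf01 ((\<lambda>p2. kantorovich d p1 p2) ` der u a)) ` der v a) \<le> c" .
qed

lemma K_dstar_bm:
  assumes "set_pmf \<pi> \<subseteq> procs" "set_pmf \<pi>' \<subseteq> procs"
  shows "kantorovich dstar \<pi> \<pi>' \<le> kantorovich bisim_metric \<pi> \<pi>'"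
  by (rule K_mono[OF dstar_bnd bm_bnd _ assms]) (use dstar_le_bm in blast)

lemma bm_pre_pt: "u \<in> procs \<Longrightarrow> v \<in> procs \<Longrightarrow> bisim_fun bisim_metric u v \<le> bisim_metric u v"
  using bm_prefixed unfolding prefixed_def by blast

lemma tree_match:
  "valid w \<Longrightarrow> \<pi> \<in> der (lt w) a \<Longrightarrow> 0 < e \<Longrightarrow>
     \<exists>\<pi>'\<in>der (rt w) a. kantorovich dstar \<pi> \<pi>' \<le> 1 - PV w + e"
proof (induction w arbitrary: a \<pi> e)
  case WNil
  from WNil.prems(2) have "step Nil a \<pi>" by (simp add: der_def)
  then have False by (rule step_Nil)
  then show ?case by (rule FalseE)
next
  case (WLeaf b p q)
  have pq: "p \<in> procs" "q \<in> procs" "bisim_metric p q < 1" using WLeaf.prems(1) by auto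
  have Bpq: "bisim_fun bisim_metric p q \<le> bisim_metric p q"
    by (rule bm_pre_pt[OF pq(1,2)])
  show ?case
  proof (cases b)
    case True
    then have \<pi>: "\<pi> \<in> der p a" using WLeaf.prems(2) by simp
    obtain \<pi>' where \<pi>': "\<pi>' \<in> der q a" "kantorovich bisim_metric \<pi> \<pi>' < bisim_metric p q + e"
      using match1[OF bm_bnd pq(1,2) \<pi> Bpq pq(3) WLeaf.prems(3)] by blast
    have "kantorovich dstar \<pi> \<pi>' \<le> kantorovich bisim_metric \<pi> \<pi>'"
      by (rule K_dstar_bm[OF der_procs[OF \<pi> pq(1)] der_procs[OF \<pi>'(1) pq(2)]])
    then show ?thesis using \<pi>' True by force
  next
    case False
    then have \<pi>: "\<pi> \<in> der q a" using WLeaf.prems(2) by simp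
    obtain \<pi>' where \<pi>': "\<pi>' \<in> der p a" "kantorovich bisim_metric \<pi> \<pi>' < bisim_metric p q + e"
      using match2[OF bm_bnd pq(1,2) \<pi> Bpq pq(3) WLeaf.prems(3)] by blast
    have "kantorovich dstar \<pi> \<pi>' \<le> kantorovich bisim_metric \<pi> \<pi>'"
      by (rule K_dstar_bm[OF der_procs[OF \<pi> pq(2)] der_procs[OF \<pi>'(1) pq(1)]])
    then show ?thesis using \<pi>' False by force
  qed
next
  case (WPre b w)
  have v: "valid w" using WPre.prems(1) by simp
  have st: "step (Prefix b [(lt w, 1)]) a \<pi>" using WPre.prems(2) by (simp add: der_def)
  from step_Prefix[OF st] have ab: "a = b" and \<pi>: "\<pi> = return_pmf (lt w)" by (simp_all add: pol1)
  have mem: "return_pmf (rt w) \<in> der (rt (WPre b w)) a"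
    using step.prefix[where qs="[(rt w, 1)]" and a=b] ab by (simp add: der_def pol1)
  have cpl: "return_pmf (lt w, rt w) \<in> couplings (return_pmf (lt w)) (return_pmf (rt w))"
    by (simp add: couplings_def)
  have lr: "lt w \<in> procs" "rt w \<in> procs" using valid_procs[OF v] by auto
  have "kantorovich dstar \<pi> (return_pmf (rt w)) \<le> E (return_pmf (lt w, rt w)) dstar"
    unfolding \<pi> by (rule K_le[OF dstar_bnd _ _ cpl]) (use lr in auto)
  also have "\<dots> = dstar (lt w) (rt w)" by simp
  also have "\<dots> \<le> 1 - PV w" by (rule dstar_tree[OF v])
  finally show ?case using mem WPre.prems(3) by force
next
  case (WPar w1 w2)
  have v: "valid w1" "valid w2" using WPar.prems(1) by auto
  have st: "step (Par UNIV (lt w1) (lt w2)) a \<pi>" using WPar.prems(2) by (simp add: der_def)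
  obtain \<pi>1 \<pi>2 where s1: "step (lt w1) a \<pi>1" and s2: "step (lt w2) a \<pi>2" and \<pi>: "\<pi> = pm \<pi>1 \<pi>2"
    using step_Par_UNIV[OF st] by blast
  have e2: "0 < e / 2" using WPar.prems(3) by simp
  obtain \<pi>1' where p1: "\<pi>1' \<in> der (rt w1) a" "kantorovich dstar \<pi>1 \<pi>1' \<le> 1 - PV w1 + e / 2"
    using WPar.IH(1)[OF v(1) _ e2, of \<pi>1 a] s1 by (auto simp: der_def)
  obtain \<pi>2' where p2: "\<pi>2' \<in> der (rt w2) a" "kantorovich dstar \<pi>2 \<pi>2' \<le> 1 - PV w2 + e / 2"
    using WPar.IH(2)[OF v(2) _ e2, of \<pi>2 a] s2 by (auto simp: der_def)
  have mem: "pm \<pi>1' \<pi>2' \<in> der (rt (WPar w1 w2)) a"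
    using step.par_sync[of a UNIV "rt w1" \<pi>1' "rt w2" \<pi>2'] p1(1) p2(1) by (simp add: der_def)
  have lr1: "lt w1 \<in> procs" "rt w1 \<in> procs" using valid_procs[OF v(1)] by auto
  have lr2: "lt w2 \<in> procs" "rt w2 \<in> procs" using valid_procs[OF v(2)] by auto
  have sp: "set_pmf \<pi>1 \<subseteq> procs" "set_pmf \<pi>1' \<subseteq> procs" "set_pmf \<pi>2 \<subseteq> procs" "set_pmf \<pi>2' \<subseteq> procs"
    using step_procs[OF s1 lr1(1)] der_procs[OF p1(1) lr1(2)] step_procs[OF s2 lr2(1)] der_procs[OF p2(1) lr2(2)]
    by auto
  let ?K1 = "kantorovich dstar \<pi>1 \<pi>1'" and ?K2 = "kantorovich dstar \<pi>2 \<pi>2'"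
  have "kantorovich dstar \<pi> (pm \<pi>1' \<pi>2') \<le> ?K1 + ?K2 - ?K1 * ?K2"
    unfolding \<pi> by (rule K_par[OF sp])
  also have "\<dots> \<le> (1 - PV w1) + (1 - PV w2) - (1 - PV w1) * (1 - PV w2) + 2 * (e / 2)"
  proof (rule F_pert)
    show "0 \<le> ?K1" "?K1 \<le> 1" using K_bounds[OF dstar_bnd sp(1,2)] by auto
    show "0 \<le> ?K2" "?K2 \<le> 1" using K_bounds[OF dstar_bnd sp(3,4)] by auto
    show "0 \<le> 1 - PV w1" "1 - PV w1 \<le> 1" using valid_PV[OF v(1)] by auto
    show "0 \<le> 1 - PV w2" "1 - PV w2 \<le> 1" using valid_PV[OF v(2)] by auto
    show "?K1 \<le> 1 - PV w1 + e / 2" "?K2 \<le> 1 - PV w2 + e / 2" using p1 p2 by auto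
    show "0 \<le> e / 2" using e2 by simp
  qed
  also have "\<dots> = 1 - PV (WPar w1 w2) + e" by (simp add: algebra_simps)
  finally show ?case using mem by blast
qed

lemma half_le:
  assumes "valid w"
  shows "sup01 ((\<lambda>p1. inf01 ((\<lambda>p2. kantorovich dstar p1 p2) ` der (rt w) a)) ` der (lt w) a) \<le> 1 - PV w"
proof (rule sup01_least)
  show "0 \<le> 1 - PV w" using valid_PV[OF assms] by simp
  fix x assume "x \<in> (\<lambda>p1. inf01 ((\<lambda>p2. kantorovich dstar p1 p2) ` der (rt w) a)) ` der (lt w) a"
  then obtain \<pi> where \<pi>: "\<pi> \<in> der (lt w) a" "x = inf01 ((\<lambda>p2. kantorovich dstar \<pi> p2) ` der (rt w) a)"
    by blast
  have lr: "lt w \<in> procs" "rt w \<in> procs" using valid_procs[OF assms] by auto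
  have S: "(\<lambda>p2. kantorovich dstar \<pi> p2) ` der (rt w) a \<subseteq> {0..1}"
    using K_bounds[OF dstar_bnd der_procs[OF \<pi>(1) lr(1)] der_procs[OF _ lr(2)]] by auto
  show "x \<le> 1 - PV w"
  proof (rule field_le_epsilon)
    fix e :: real assume e: "0 < e"
    obtain \<pi>' where \<pi>': "\<pi>' \<in> der (rt w) a" "kantorovich dstar \<pi> \<pi>' \<le> 1 - PV w + e"
      using tree_match[OF assms \<pi>(1) e] by blast
    have "x \<le> kantorovich dstar \<pi> \<pi>'" unfolding \<pi>(2) by (rule inf01_lower[OF _ S]) (use \<pi>' in blast)
    then show "x \<le> 1 - PV w + e" using \<pi>' by simp
  qed
qed

lemma B_tree:
  assumes "valid w"
  shows "bisim_fun dstar (lt w) (rt w) \<le> 1 - PV w"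
  unfolding bisim_fun_def
proof (rule sup01_least)
  show "0 \<le> 1 - PV w" using valid_PV[OF assms] by simp
  fix x assume "x \<in> (\<lambda>a. hausdorff (kantorovich dstar) (der (lt w) a) (der (rt w) a)) ` UNIV"
  then obtain a where x: "x = hausdorff (kantorovich dstar) (der (lt w) a) (der (rt w) a)" by blast
  have h1: "sup01 ((\<lambda>p1. inf01 ((\<lambda>p2. kantorovich dstar p1 p2) ` der (rt w) a)) ` der (lt w) a) \<le> 1 - PV w"
    by (rule half_le[OF assms])
  have h2: "sup01 ((\<lambda>p1. inf01 ((\<lambda>p2. kantorovich dstar p1 p2) ` der (lt w) a)) ` der (rt w) a) \<le> 1 - PV w"
    using half_le[of "swp w" a] assms by simp
  show "x \<le> 1 - PV w" unfolding x hausdorff_def using h1 h2 by simp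
qed

lemma dstar_prefixed: "prefixed dstar"
  unfolding prefixed_def
proof (intro ballI)
  fix u v :: "('a, 'b) pterm" assume uv: "u \<in> procs" "v \<in> procs"
  show "bisim_fun dstar u v \<le> dstar u v"
    unfolding dstar_def[of u v]
  proof (rule cInf_greatest)
    fix x assume x: "x \<in> insert 1 {1 - PV w | w. valid w \<and> lt w = u \<and> rt w = v}"
    show "bisim_fun dstar u v \<le> x"
    proof (cases "x = 1")
      case True then show ?thesis using B_bounds[OF dstar_bnd uv] by simp
    next
      case False
      then have "\<exists>w. valid w \<and> lt w = u \<and> rt w = v \<and> x = 1 - PV w" using x by auto
      then obtain w where w: "valid w" "lt w = u" "rt w = v" "x = 1 - PV w" by blast
      show ?thesis using B_tree[OF w(1)] w by simp
    qed
  qed simp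
qed

lemma bm_le_tree: "valid w \<Longrightarrow> bisim_metric (lt w) (rt w) \<le> 1 - PV w"
proof -
  assume v: "valid w"
  have "bisim_metric (lt w) (rt w) \<le> dstar (lt w) (rt w)"
    using bm_le[OF dstar_bnd dstar_prefixed] valid_procs[OF v] by blast
  also have "\<dots> \<le> 1 - PV w" by (rule dstar_tree[OF v])
  finally show ?thesis .
qed



fun tr :: "('v \<Rightarrow> ('a, 'v) pterm) \<Rightarrow> ('v \<Rightarrow> ('a, 'v) pterm) \<Rightarrow> ('a, 'v) pterm \<Rightarrow> ('a, 'v) wt" where
  "tr s1 s2 Nil = WNil"
| "tr s1 s2 (Var x) = WLeaf True (s1 x) (s2 x)"
| "tr s1 s2 (Prefix a [(t, q)]) = WPre a (tr s1 s2 t)"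
| "tr s1 s2 (Prefix a qs) = WNil"
| "tr s1 s2 (Plus t u) = WNil"
| "tr s1 s2 (Par B t u) = WPar (tr s1 s2 t) (tr s1 s2 u)"

lemma tr_lr: "deterministic t \<Longrightarrow> lt (tr s1 s2 t) = subst s1 t \<and> rt (tr s1 s2 t) = subst s2 t"
  by (induction rule: deterministic.induct) auto

lemma tr_valid:
  "deterministic t \<Longrightarrow> closed_subst s1 \<Longrightarrow> closed_subst s2 \<Longrightarrow> \<forall>x. bisim_metric (s1 x) (s2 x) < 1
    \<Longrightarrow> valid (tr s1 s2 t)"
  by (induction rule: deterministic.induct) (auto simp: closed_subst_def)

lemma mult_fin: "deterministic t \<Longrightarrow> mult t x \<noteq> \<infinity>"
  by (induction rule: deterministic.induct) (auto simp: zero_enat_def one_enat_def)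

lemma vars_fin: "deterministic t \<Longrightarrow> finite (vars t)"
  by (induction rule: deterministic.induct) auto

lemma epow_add: "m1 \<noteq> \<infinity> \<Longrightarrow> m2 \<noteq> \<infinity> \<Longrightarrow> epow c (m1 + m2) = epow c m1 * epow c m2"
  by (cases m1; cases m2) (auto simp: epow_def power_add)

lemma epow_nonneg: "0 \<le> c \<Longrightarrow> 0 \<le> epow c m"
  by (cases m) (auto simp: epow_def)

lemma PV_tr:
  "deterministic t \<Longrightarrow> finite F \<Longrightarrow> vars t \<subseteq> F \<Longrightarrow>
    PV (tr s1 s2 t) = (\<Prod>x\<in>F. epow (1 - bisim_metric (s1 x) (s2 x)) (mult t x))"
proof (induction rule: deterministic.induct)
  case 1
  then show ?case by (simp add: epow_def zero_enat_def)
next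
  case (2 y)
  have "(\<Prod>x\<in>F. epow (1 - bisim_metric (s1 x) (s2 x)) (mult (Var y) x))
      = (\<Prod>x\<in>F. if x = y then 1 - bisim_metric (s1 x) (s2 x) else 1)"
    by (rule prod.cong) (auto simp: epow_def zero_enat_def one_enat_def)
  also have "\<dots> = 1 - bisim_metric (s1 y) (s2 y)" using 2 by (simp add: prod.delta)
  finally show ?case by simp
next
  case (3 t a)
  then show ?case by simp
next
  case (4 t u)
  have "(\<Prod>x\<in>F. epow (1 - bisim_metric (s1 x) (s2 x)) (mult (Par UNIV t u) x))
     = (\<Prod>x\<in>F. epow (1 - bisim_metric (s1 x) (s2 x)) (mult t x) * epow (1 - bisim_metric (s1 x) (s2 x)) (mult u x))"
    by (rule prod.cong) (auto simp: epow_add mult_fin 4)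
  also have "\<dots> = PV (tr s1 s2 t) * PV (tr s1 s2 u)"
    using 4 by (simp add: prod.distrib)
  finally show ?case by simp
qed

theorem proposition2:
  fixes t :: "('a::countable, 'v::countable) pterm"
    and \<sigma>1 \<sigma>2 :: "'v \<Rightarrow> ('a, 'v) pterm"
  assumes "infinite (UNIV :: 'v set)"
    and "deterministic t"
    and "closed_subst \<sigma>1" and "closed_subst \<sigma>2"
    and "\<forall>x. bisim_metric (\<sigma>1 x) (\<sigma>2 x) < 1"
  shows "bisim_metric (subst \<sigma>1 t) (subst \<sigma>2 t)
           \<le> dda (mult t) (\<lambda>x. bisim_metric (\<sigma>1 x) (\<sigma>2 x))"
proof -
  define w where "w = tr \<sigma>1 \<sigma>2 t"
  have v: "valid w" unfolding w_def by (rule tr_valid[OF assms(2-5)])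
  have lr: "lt w = subst \<sigma>1 t" "rt w = subst \<sigma>2 t" using tr_lr[OF assms(2)] unfolding w_def by auto
  have "bisim_metric (subst \<sigma>1 t) (subst \<sigma>2 t) \<le> 1 - PV w"
    using bm_le_tree[OF v] lr by simp
  also have "\<dots> \<le> dda (mult t) (\<lambda>x. bisim_metric (\<sigma>1 x) (\<sigma>2 x))"
  proof -
    let ?S = "{(\<Prod>x\<in>F. epow (1 - bisim_metric (\<sigma>1 x) (\<sigma>2 x)) (mult t x)) | F. finite F}"
    have mem: "PV w \<in> ?S"
      using PV_tr[OF assms(2) vars_fin[OF assms(2)] order_refl, of \<sigma>1 \<sigma>2] vars_fin[OF assms(2)]
      unfolding w_def by blast
    have bdd: "bdd_below ?S"
    proof (rule bdd_belowI[where m=0])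
      fix y assume "y \<in> ?S"
      then obtain F where F: "y = (\<Prod>x\<in>F. epow (1 - bisim_metric (\<sigma>1 x) (\<sigma>2 x)) (mult t x))" by blast
      have "\<forall>x. 0 \<le> 1 - bisim_metric (\<sigma>1 x) (\<sigma>2 x)" using assms(5) by (simp add: less_imp_le)
      then show "0 \<le> y" unfolding F by (intro prod_nonneg) (simp add: epow_nonneg)
    qed
    have "Inf ?S \<le> PV w" by (rule cInf_lower[OF mem bdd])
    then show ?thesis unfolding dda_def by simp
  qed
  finally show ?thesis .
qed

end
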